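(* Let $(X_c,\Lambda_c)\in \mathbb{K}^{n \times p} \times \mathbb{K}^{p \times p}$ be an invariant pair of $Q(\lambda)=\lambda^2 M+\lambda D+K \in \mathbb{Q}_n(\star,\epsilon_1,\epsilon_2)$ with $\mathrm{rank}(X_c)=p \leq n$. Suppose $X_c=\begin{bmatrix}Q_1& Q_2\end{bmatrix} \begin{bmatrix}R\\ 0\end{bmatrix}$ where $R\in \mathbb{K}^{p\times p}$ is nonsingular and $Q=\begin{bmatrix}Q_1& Q_2\end{bmatrix} \in\mathbb{K}^{n\times n}$ satisfies $Q^{\star} Q=QQ^{\star}=I_n$. Let $\Lambda_a \in \mathbb{K}^{p \times p}$. Set $$\Delta M=Q \begin{bmatrix}-Q_1^{\star} M Q_1& \epsilon_1 M_{12}^\star \\ M_{12}& M_{22}\end{bmatrix}Q^{\star},\quad \Delta D=Q \begin{bmatrix}-Q_1^{\star} D Q_1& \epsilon_2 D_{12}^\star \\ D_{12}& D_{22}\end{bmatrix}Q^{\star},\quad \Delta K=Q \begin{bmatrix}-Q_1^{\star} K Q_1& \epsilon_1 K_{12}^\star \\ K_{12}& K_{22}\end{bmatrix}Q^{\star}$$ with $M_{12}=[Z_1-WS(\Lambda_a^2)^*]R^{-1}$, $D_{12}=[Z_2-WS \Lambda_a^*]R^{-1}$, $K_{12}=[Z_3-WS]R^{-1}$, where $M_{22}=\epsilon_1 M_{22}^\star$, $D_{22}=\epsilon_2 D_{22}^\star$, $K_{22}=\epsilon_1 K_{22}^\star$ are arbitrary matrices of order $(n-p) \times (n-p)$, $W=Q_2^{\star}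 MX_c(\Lambda_a^2-\Lambda_c^2)+Q_2^{\star} DX_c(\Lambda_a-\Lambda_c)+Z_1\Lambda_a^2+Z_2\Lambda_a+Z_3$, $S=((\Lambda_a^2)^*\Lambda_a^2+\Lambda_a^* \Lambda_a+I_p)^{-1}$, and $Z_1,Z_2,Z_3 \in \mathbb{K}^{(n-p) \times p}$ are arbitrary. Then $(X_c,\Lambda_a)$ is an invariant pair of $Q_\Delta (\lambda)=\lambda^2 (M+\Delta M)+\lambda (D+\Delta D)+ (K+\Delta K) \in \mathbb{Q}_n(\star,\epsilon_1,\epsilon_2)$.
   Context: $\mathbb{K}\in\{\mathbb{R},\mathbb{C}\}$, $\star\in\{*,T\}$ (conjugate transpose or transpose), $\epsilon_1,\epsilon_2\in\{1,-1\}$. $\mathbb{Q}_n(\star,\epsilon_1,\epsilon_2)$ is the set of quadratic matrix polynomials $\lambda^2M+\lambda D+K\in\mathbb{K}^{n\times n}[\lambda]$ with $M^\star=\epsilon_1M$, $D^\star=\epsilon_2D$, $K^\star=\epsilon_1K$. For $X\in\mathbb{K}^{n\times p}$, $\Lambda\in\mathbb{K}^{p\times p}$, $(X,\Lambda)$ is an invariant pair of $\lambda^2M+\lambda D+K$ if $MX\Lambda^2+DX\Lambda+KX=0$. *)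

theory Defs
  imports Complex_Main "Jordan_Normal_Form.DL_Rank"
begin

text \<open>Matrices over K are modelled as complex matrices; the case K = R is the case
  where all data matrices have real entries (predicate real_mat).\<close>

definition real_mat :: "complex mat \<Rightarrow> bool" where
  "real_mat A \<longleftrightarrow> (\<forall>i < dim_row A. \<forall>j < dim_col A. Im (A $$ (i, j)) = 0)"

definition ctrans :: "complex mat \<Rightarrow> complex mat" where
  "ctrans A = transpose_mat (map_mat cnj A)"

definition star_op :: "bool \<Rightarrow> complex mat \<Rightarrow> complex mat" where
  "star_op cs A = (if cs then ctrans A else transpose_mat A)"

definition minv :: "complex mat \<Rightarrow> complex mat" where
  "minv A = (THE B. B \<in> carrier_mat (dim_row A) (dim_row A) \<and>
                    A * B = 1\<^sub>m (dim_row A) \<and> B * A = 1\<^sub>m (dim_row A))"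

text \<open>Horizontal concatenation [A B].\<close>
definition append_cols :: "complex mat \<Rightarrow> complex mat \<Rightarrow> complex mat" where
  "append_cols A B = four_block_mat A B (0\<^sub>m 0 (dim_col A)) (0\<^sub>m 0 (dim_col B))"

definition in_Qn :: "nat \<Rightarrow> bool \<Rightarrow> complex \<Rightarrow> complex \<Rightarrow>
    complex mat \<Rightarrow> complex mat \<Rightarrow> complex mat \<Rightarrow> bool" where
  "in_Qn n cs e1 e2 M D K \<longleftrightarrow>
     M \<in> carrier_mat n n \<and> D \<in> carrier_mat n n \<and> K \<in> carrier_mat n n \<and>
     star_op cs M = e1 \<cdot>\<^sub>m M \<and> star_op cs D = e2 \<cdot>\<^sub>m D \<and> star_op cs K = e1 \<cdot>\<^sub>m K"

definition invariant_pair :: "complex mat \<Rightarrow> complex mat \<Rightarrow> complex mat \<Rightarrow>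
    complex mat \<Rightarrow> complex mat \<Rightarrow> bool" where
  "invariant_pair M D K X L \<longleftrightarrow>
     M * X * (L * L) + D * X * L + K * X = 0\<^sub>m (dim_row M) (dim_col L)"

end

theory Submission imports Defs begin
lemma star_dims[simp]: "dim_row (star_op cs A) = dim_col A" "dim_col (star_op cs A) = dim_row A"
  by (auto simp: star_op_def ctrans_def)

lemma star_carrier[simp]: "A \<in> carrier_mat a b \<Longrightarrow> star_op cs A \<in> carrier_mat b a"
  unfolding carrier_mat_def by simp

lemma star_index[simp]: "i < dim_col A \<Longrightarrow> j < dim_row A \<Longrightarrow>
   star_op cs A $$ (i,j) = (if cs then cnj (A $$ (j,i)) else A $$ (j,i))"
  by (auto simp: star_op_def ctrans_def)

lemma map_cnj_mult: assumes "A \<in> carrier_mat a b" "B \<in> carrier_mat b c"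
  shows "map_mat cnj (A * B) = map_mat cnj A * map_mat cnj B"
proof (rule eq_matI)
  fix i j assume ij: "i < dim_row (map_mat cnj A * map_mat cnj B)" "j < dim_col (map_mat cnj A * map_mat cnj B)"
  have r: "row (map_mat cnj A) i = conjugate (row A i)" using ij assms by (intro eq_vecI, auto)
  have c: "col (map_mat cnj B) j = conjugate (col B j)" using ij assms by (intro eq_vecI, auto)
  show "map_mat cnj (A * B) $$ (i, j) = (map_mat cnj A * map_mat cnj B) $$ (i, j)"
    using ij assms r c conjugate_sprod_vec[of "row A i" b "col B j"] by auto
qed (use assms in auto)

lemma star_mult: assumes "A \<in> carrier_mat a b" "B \<in> carrier_mat b c"
  shows "star_op cs (A * B) = star_op cs B * star_op cs A"
  using assms by (auto simp: star_op_def ctrans_def map_cnj_mult transpose_mult[of _ a b _ c])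

lemma star_star[simp]: "star_op cs (star_op cs A) = A"
  by (rule eq_matI, auto)

lemma star_add: assumes "A \<in> carrier_mat a b" "B \<in> carrier_mat a b"
  shows "star_op cs (A + B) = star_op cs A + star_op cs B"
  using assms by (intro eq_matI, auto)

lemma star_minus: assumes "A \<in> carrier_mat a b" "B \<in> carrier_mat a b"
  shows "star_op cs (A - B) = star_op cs A - star_op cs B"
  using assms by (intro eq_matI, auto)

lemma star_uminus: "star_op cs (- A) = - star_op cs A"
  by (intro eq_matI, auto)

lemma star_smult: "e \<in> {1, -1} \<Longrightarrow> star_op cs (e \<cdot>\<^sub>m A) = e \<cdot>\<^sub>m star_op cs A"
  by (intro eq_matI, auto)

lemma star_zero[simp]: "star_op cs (0\<^sub>m a b) = 0\<^sub>m b a"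
  by (intro eq_matI, auto)

lemma star_four_block: assumes c: "A \<in> carrier_mat nr1 nc1" "B \<in> carrier_mat nr1 nc2"
  "C \<in> carrier_mat nr2 nc1" "D \<in> carrier_mat nr2 nc2"
  shows "star_op cs (four_block_mat A B C D) =
    four_block_mat (star_op cs A) (star_op cs C) (star_op cs B) (star_op cs D)"
  using c by (intro eq_matI, auto)

lemma star_append_cols: assumes "Q1 \<in> carrier_mat n p" "Q2 \<in> carrier_mat n r"
  shows "star_op cs (append_cols Q1 Q2) = star_op cs Q1 @\<^sub>r star_op cs Q2"
  using assms unfolding append_cols_def append_rows_def
  by (subst star_four_block[of _ n p _ r _ 0], auto)

lemma append_cols_carrier: "Q1 \<in> carrier_mat n p \<Longrightarrow> Q2 \<in> carrier_mat n r \<Longrightarrow> append_cols Q1 Q2 \<in> carrier_mat n (p + r)"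
  unfolding append_cols_def using four_block_carrier_mat[of Q1 n p "0\<^sub>m 0 r" 0 r] by simp

lemma four_block_triv: "X \<in> carrier_mat a b \<Longrightarrow> four_block_mat X (0\<^sub>m a 0) (0\<^sub>m 0 b) (0\<^sub>m 0 0) = X"
  by (intro eq_matI, auto)

lemma cols_rows: assumes "Q1 \<in> carrier_mat n p" "Q2 \<in> carrier_mat n r" "A \<in> carrier_mat p m" "B \<in> carrier_mat r m"
  shows "append_cols Q1 Q2 * (A @\<^sub>r B) = Q1 * A + Q2 * B"
  unfolding append_cols_def append_rows_def using assms
  by (subst mult_four_block_mat[of Q1 n p Q2 r _ 0 _ A m _ 0], auto intro!: eq_matI)

lemma rows_mult: assumes "P1 \<in> carrier_mat p n" "P2 \<in> carrier_mat r n" "Y \<in> carrier_mat n m"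
  shows "(P1 @\<^sub>r P2) * Y = (P1 * Y) @\<^sub>r (P2 * Y)"
  unfolding append_rows_def using assms
  by (subst four_block_triv[of Y n m, symmetric], simp, subst mult_four_block_mat[of P1 p n _ 0 P2 r _ Y m _ 0], auto intro!: eq_matI)

lemma block_mult_rows: assumes "A \<in> carrier_mat p p" "B \<in> carrier_mat p r" "C \<in> carrier_mat r p" "D \<in> carrier_mat r r"
  "R \<in> carrier_mat p m"
  shows "four_block_mat A B C D * (R @\<^sub>r 0\<^sub>m r m) = (A * R) @\<^sub>r (C * R)"
  unfolding append_rows_def using assms
  by (subst mult_four_block_mat[of A p p B r C r D R m _ 0], auto intro!: eq_matI)

lemma rows_add: assumes "A \<in> carrier_mat p m" "B \<in> carrier_mat r m" "C \<in> carrier_mat p m" "D \<in> carrier_mat r m"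
  shows "(A @\<^sub>r B) + (C @\<^sub>r D) = (A + C) @\<^sub>r (B + D)"
  unfolding append_rows_def using assms by (intro eq_matI, auto)

lemma rows_cols: assumes "P1 \<in> carrier_mat p n" "P2 \<in> carrier_mat r n" "Q1 \<in> carrier_mat n p" "Q2 \<in> carrier_mat n r"
  shows "(P1 @\<^sub>r P2) * append_cols Q1 Q2 = four_block_mat (P1 * Q1) (P1 * Q2) (P2 * Q1) (P2 * Q2)"
  unfolding append_cols_def append_rows_def using assms
  by (subst mult_four_block_mat[of P1 p n _ 0 P2 r _ Q1 p Q2 r], auto intro!: eq_matI)

lemma minv_props: assumes A: "A \<in> carrier_mat n n" and d: "det A \<noteq> 0"
  shows "minv A \<in> carrier_mat n n \<and> A * minv A = 1\<^sub>m n \<and> minv A * A = 1\<^sub>m n"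
proof -
  from det_non_zero_imp_unit[OF A d, of undefined]
  obtain B where B: "B \<in> carrier_mat n n" "B * A = 1\<^sub>m n" "A * B = 1\<^sub>m n"
    unfolding Units_def ring_mat_def by auto
  have dr: "dim_row A = n" using A by auto
  have "\<exists>!B. B \<in> carrier_mat (dim_row A) (dim_row A) \<and> A * B = 1\<^sub>m (dim_row A) \<and> B * A = 1\<^sub>m (dim_row A)"
  proof (rule ex1I[of _ B])
    fix C assume C: "C \<in> carrier_mat (dim_row A) (dim_row A) \<and> A * C = 1\<^sub>m (dim_row A) \<and> C * A = 1\<^sub>m (dim_row A)"
    have "C = C * (A * B)" using C B dr by auto
    also have "\<dots> = (C * A) * B" by (subst assoc_mult_mat[of C n n A n B n]) (use C B A dr in auto)
    also have "\<dots> = 1\<^sub>m n * B" using C dr by (simp only:)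
    also have "\<dots> = B" using B by simp
    finally show "C = B" .
  qed (use B dr in auto)
  from theI'[OF this] show ?thesis unfolding minv_def dr by auto
qed

lemma map_cnj_vec: assumes A: "A \<in> carrier_mat a b" and v: "v \<in> carrier_vec b"
  shows "map_mat cnj A *\<^sub>v conjugate v = conjugate (A *\<^sub>v v)"
proof (rule eq_vecI)
  fix i assume i: "i < dim_vec (conjugate (A *\<^sub>v v))"
  have r: "row (map_mat cnj A) i = conjugate (row A i)" using i A by (intro eq_vecI, auto)
  show "(map_mat cnj A *\<^sub>v conjugate v) $ i = conjugate (A *\<^sub>v v) $ i"
    using i A v r conjugate_sprod_vec[of "row A i" b v] by auto
qed (use A in auto)

lemma ctrans_sprod: assumes A: "A \<in> carrier_mat a b" and w: "w \<in> carrier_vec a" and v: "v \<in> carrier_vec b"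
  shows "(ctrans A *\<^sub>v w) \<bullet>c v = w \<bullet>c (A *\<^sub>v v)"
  unfolding ctrans_def
  using transpose_vec_mult_scalar[of "map_mat cnj A" a b "conjugate v" w] A w v map_cnj_vec[OF A v]
  by auto

lemma pd_det: assumes L: "L \<in> carrier_mat p p" and L2: "L2 \<in> carrier_mat p p"
  shows "det (ctrans L2 * L2 + ctrans L * L + 1\<^sub>m p) \<noteq> 0"
proof
  let ?N = "ctrans L2 * L2 + ctrans L * L + 1\<^sub>m p"
  have cL: "ctrans L \<in> carrier_mat p p" "ctrans L2 \<in> carrier_mat p p" using L L2 by (auto simp: ctrans_def)
  have N: "?N \<in> carrier_mat p p" using cL L L2 by auto
  assume "det ?N = 0"
  then obtain v where v: "v \<in> carrier_vec p" "v \<noteq> 0\<^sub>v p" "?N *\<^sub>v v = 0\<^sub>v p"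
    using det_0_iff_vec_prod_zero[OF N] by auto
  have Nv: "?N *\<^sub>v v = ctrans L2 *\<^sub>v (L2 *\<^sub>v v) + ctrans L *\<^sub>v (L *\<^sub>v v) + v"
    using cL L L2 v(1)
    by (simp add: add_mult_distrib_mat_vec[of _ p p] assoc_mult_mat_vec[of _ p p _ p])
  have "0 = (?N *\<^sub>v v) \<bullet>c v" using v by simp
  also have "\<dots> = (ctrans L2 *\<^sub>v (L2 *\<^sub>v v)) \<bullet>c v + (ctrans L *\<^sub>v (L *\<^sub>v v)) \<bullet>c v + v \<bullet>c v"
    unfolding Nv using cL L L2 v(1)
    by (simp add: add_scalar_prod_distrib[of _ p])
  also have "\<dots> = (L2 *\<^sub>v v) \<bullet>c (L2 *\<^sub>v v) + (L *\<^sub>v v) \<bullet>c (L *\<^sub>v v) + v \<bullet>c v"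
    using ctrans_sprod[OF L2, of "L2 *\<^sub>v v" v] ctrans_sprod[OF L, of "L *\<^sub>v v" v] L L2 v(1) by auto
  finally have eq: "(L2 *\<^sub>v v) \<bullet>c (L2 *\<^sub>v v) + (L *\<^sub>v v) \<bullet>c (L *\<^sub>v v) + v \<bullet>c v = 0" by simp
  have g1: "(L2 *\<^sub>v v) \<bullet>c (L2 *\<^sub>v v) \<ge> 0" "(L *\<^sub>v v) \<bullet>c (L *\<^sub>v v) \<ge> 0" "v \<bullet>c v \<ge> 0" by auto
  have "v \<bullet>c v = 0"
  proof -
    have "v \<bullet>c v \<le> 0" using eq g1 by (metis add_increasing add_le_same_cancel2 order_refl)
    then show ?thesis using g1(3) by (rule order_antisym)
  qed
  then have "v = 0\<^sub>v p" using v(1) by simp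
  with v(2) show False by simp
qed

lemma herm_part:
  fixes M Q1 Q2 M12 M22 :: "complex mat"
  assumes e: "e \<in> {1, -1}" and M: "M \<in> carrier_mat n n" and Ms: "star_op cs M = e \<cdot>\<^sub>m M"
    and Q1: "Q1 \<in> carrier_mat n p" and Q2: "Q2 \<in> carrier_mat n r"
    and M12: "M12 \<in> carrier_mat r p" and M22: "M22 \<in> carrier_mat r r"
    and M22s: "M22 = e \<cdot>\<^sub>m star_op cs M22"
  shows "star_op cs (M + append_cols Q1 Q2 * four_block_mat (- (star_op cs Q1 * M * Q1)) (e \<cdot>\<^sub>m star_op cs M12) M12 M22
            * star_op cs (append_cols Q1 Q2))
    = e \<cdot>\<^sub>m (M + append_cols Q1 Q2 * four_block_mat (- (star_op cs Q1 * M * Q1)) (e \<cdot>\<^sub>m star_op cs M12) M12 M22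
            * star_op cs (append_cols Q1 Q2))"
proof -
  define Q where "Q = append_cols Q1 Q2"
  define A where "A = - (star_op cs Q1 * M * Q1)"
  define F where "F = four_block_mat A (e \<cdot>\<^sub>m star_op cs M12) M12 M22"
  have ee: "e * e = 1" using e by auto
  have Qc: "Q \<in> carrier_mat n (p + r)" unfolding Q_def using Q1 Q2 by (rule append_cols_carrier)
  have Ac: "A \<in> carrier_mat p p" unfolding A_def using Q1 M by (intro uminus_carrier_mat mult_carrier_mat star_carrier)
  have Fc: "F \<in> carrier_mat (p + r) (p + r)" unfolding F_def using Ac M12 M22 
    by (intro four_block_carrier_mat smult_carrier_mat star_carrier)
  have sA: "star_op cs A = e \<cdot>\<^sub>m A"
  proof -
    have "star_op cs A = - (star_op cs Q1 * (star_op cs M * star_op cs (star_op cs Q1)))"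
    proof -
      have "star_op cs (star_op cs Q1 * M * Q1) = star_op cs Q1 * star_op cs (star_op cs Q1 * M)"
        by (rule star_mult[of _ p n _ p]) (use Q1 M in auto)
      also have "\<dots> = star_op cs Q1 * (star_op cs M * star_op cs (star_op cs Q1))"
        using star_mult[of "star_op cs Q1" p n M n cs] Q1 M by simp
      finally show ?thesis unfolding A_def star_uminus by simp
    qed
    also have "\<dots> = - (star_op cs Q1 * ((e \<cdot>\<^sub>m M) * Q1))" using Ms by simp
    also have "\<dots> = - (e \<cdot>\<^sub>m (star_op cs Q1 * M * Q1))"
      using Q1 M by (simp add: mult_smult_assoc_mat[of M n n Q1 p] mult_smult_distrib[of _ p n _ p]
          assoc_mult_mat[of "star_op cs Q1" p n M n Q1 p])
    also have "\<dots> = e \<cdot>\<^sub>m A" unfolding A_def by (intro eq_matI) auto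
    finally show ?thesis .
  qed
  have sB: "star_op cs (e \<cdot>\<^sub>m star_op cs M12) = e \<cdot>\<^sub>m M12" using star_smult[OF e, of cs "star_op cs M12"] by simp
  have sC: "e \<cdot>\<^sub>m (e \<cdot>\<^sub>m star_op cs M12) = star_op cs M12" using ee M12 by (intro eq_matI) auto
  have sD: "star_op cs M22 = e \<cdot>\<^sub>m M22"
  proof -
    have "star_op cs M22 = star_op cs (e \<cdot>\<^sub>m star_op cs M22)" using M22s by (rule arg_cong)
    then show ?thesis using star_smult[OF e, of cs "star_op cs M22"] by simp
  qed
  have sF: "star_op cs F = e \<cdot>\<^sub>m F"
    unfolding F_def using Ac M12 M22
    by (simp add: star_four_block[of _ p p _ r _ r] smult_four_block_mat[of _ p p _ r _ r] sA sB sD sC star_smult[OF e])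
  have "star_op cs (Q * F * star_op cs Q) = Q * star_op cs F * star_op cs Q"
    using Qc Fc by (simp add: star_mult[of _ n "p+r" _ n] star_mult[of _ n "p+r" _ "p+r"]
       assoc_mult_mat[of Q n "p+r" "star_op cs F" "p+r" "star_op cs Q" n])
  also have "\<dots> = e \<cdot>\<^sub>m (Q * F * star_op cs Q)" unfolding sF using Qc Fc
    by (simp add: mult_smult_distrib[of _ n "p+r" _ "p+r"] mult_smult_assoc_mat[of _ n "p+r" _ n])
  finally have sQFQ: "star_op cs (Q * F * star_op cs Q) = e \<cdot>\<^sub>m (Q * F * star_op cs Q)" .
  have QFQ: "Q * F * star_op cs Q \<in> carrier_mat n n" using Qc Fc by (intro mult_carrier_mat star_carrier)
  have "star_op cs (M + Q * F * star_op cs Q) = e \<cdot>\<^sub>m (M + Q * F * star_op cs Q)"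
    unfolding star_add[OF M QFQ] add_smult_distrib_left_mat[OF M QFQ] Ms sQFQ ..
  then show ?thesis unfolding Q_def A_def F_def .
qed

lemma inv_part:
  fixes M Q1 Q2 B C D R Xc :: "complex mat"
  assumes M: "M \<in> carrier_mat n n"
    and Q1: "Q1 \<in> carrier_mat n p" and Q2: "Q2 \<in> carrier_mat n r" and npr: "p + r = n"
    and Qu1: "star_op cs (append_cols Q1 Q2) * append_cols Q1 Q2 = 1\<^sub>m n"
    and Qu2: "append_cols Q1 Q2 * star_op cs (append_cols Q1 Q2) = 1\<^sub>m n"
    and R: "R \<in> carrier_mat p p" and B: "B \<in> carrier_mat p r" and C: "C \<in> carrier_mat r p" and D: "D \<in> carrier_mat r r"
    and X: "Xc = append_cols Q1 Q2 * (R @\<^sub>r 0\<^sub>m r p)"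
  shows "(M + append_cols Q1 Q2 * four_block_mat (- (star_op cs Q1 * M * Q1)) B C D * star_op cs (append_cols Q1 Q2)) * Xc
     = Q2 * (star_op cs Q2 * M * Xc + C * R)"
proof -
  define Q where "Q = append_cols Q1 Q2"
  define Qs where "Qs = star_op cs Q"
  define P1 where "P1 = star_op cs Q1"
  define P2 where "P2 = star_op cs Q2"
  define A where "A = - (P1 * M * Q1)"
  define F where "F = four_block_mat A B C D"
  define Y where "Y = R @\<^sub>r 0\<^sub>m r p"
  have Qc: "Q \<in> carrier_mat n n" unfolding Q_def using append_cols_carrier[OF Q1 Q2] npr by simp
  have Qsc: "Qs \<in> carrier_mat n n" unfolding Qs_def using Qc by simp
  have P1c: "P1 \<in> carrier_mat p n" unfolding P1_def using Q1 by simp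
  have P2c: "P2 \<in> carrier_mat r n" unfolding P2_def using Q2 by simp
  have Ac: "A \<in> carrier_mat p p" unfolding A_def using P1c M Q1 by (intro uminus_carrier_mat mult_carrier_mat)
  have Fc: "F \<in> carrier_mat n n" unfolding F_def using Ac B C D npr four_block_carrier_mat[OF Ac D] by simp
  have Yc: "Y \<in> carrier_mat n p" unfolding Y_def using R npr carrier_append_rows[OF R zero_carrier_mat[of r p]] by simp
  have Qs: "Qs = P1 @\<^sub>r P2" unfolding Qs_def Q_def P1_def P2_def by (rule star_append_cols[OF Q1 Q2])
  have XQ: "Xc = Q * Y" unfolding X Q_def Y_def ..
  have Xc: "Xc \<in> carrier_mat n p" unfolding XQ using Qc Yc by simp
  have X1: "Xc = Q1 * R" unfolding XQ Q_def Y_def cols_rows[OF Q1 Q2 R zero_carrier_mat[of r p]]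
    using Q1 Q2 R by simp
  have QsQY: "Qs * (Q * Y) = Y"
    using Qu1[folded Q_def, folded Qs_def] Qc Qsc Yc by (simp add: assoc_mult_mat[of Qs n n Q n Y p, symmetric])
  have MX: "M * Xc = Q * (Qs * (M * Xc))"
    using Qu2[folded Q_def, folded Qs_def] Qc Qsc Xc M by (simp add: assoc_mult_mat[of Q n n Qs n "M * Xc" p, symmetric])
  also have "\<dots> = Q1 * (P1 * M * Xc) + Q2 * (P2 * M * Xc)"
    unfolding Qs rows_mult[OF P1c P2c mult_carrier_mat[OF M Xc]] Q_def
    using cols_rows[OF Q1 Q2, of "P1 * (M * Xc)" p "P2 * (M * Xc)"] P1c P2c M Xc
    by (simp add: assoc_mult_mat[of P1 p n M n Xc p] assoc_mult_mat[of P2 r n M n Xc p])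
  finally have MX: "M * Xc = Q1 * (P1 * M * Xc) + Q2 * (P2 * M * Xc)" .
  have "Q * F * Qs * Xc = Q * (F * Y)"
    unfolding XQ using Qc Fc Qsc Yc QsQY by (simp add: assoc_mult_mat[of Q n n F n Qs n] assoc_mult_mat[of Q n n "F*Qs" n "Q*Y" p]
       assoc_mult_mat[of F n n Qs n "Q*Y" p])
  also have "\<dots> = Q1 * (A * R) + Q2 * (C * R)"
    unfolding Y_def F_def block_mult_rows[OF Ac B C D R] Q_def
    by (rule cols_rows[OF Q1 Q2]) (use Ac C R in auto)
  also have "A * R = - (P1 * M * Xc)" unfolding A_def X1 using P1c M Q1 R
    by (simp add: assoc_mult_mat[of P1 p n M n Q1 p] assoc_mult_mat[of P1 p n "M*Q1" p R p]
      assoc_mult_mat[of M n n Q1 p R p] assoc_mult_mat[of P1 p n M n "Q1*R" p])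
  finally have DX: "Q * F * Qs * Xc = Q1 * (- (P1 * M * Xc)) + Q2 * (C * R)" .
  have QFQ: "Q * F * Qs \<in> carrier_mat n n" using Qc Fc Qsc by simp
  have "(M + Q * F * Qs) * Xc = M * Xc + Q * F * Qs * Xc"
    by (rule add_mult_distrib_mat[OF M QFQ Xc])
  also have "\<dots> = Q2 * (P2 * M * Xc + C * R)"
  proof -
    have d: "Q2 * (P2 * M * Xc + C * R) = Q2 * (P2 * M * Xc) + Q2 * (C * R)"
      by (rule mult_add_distrib_mat[OF Q2]) (use P2c M Xc C R in auto)
    show ?thesis unfolding MX DX d
      using Q1 Q2 P1c P2c M Xc C R by (intro eq_matI) auto
  qed
  finally show ?thesis unfolding Q_def Qs_def F_def A_def P1_def P2_def .
qed

lemma lin_comb: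
  fixes aL2 aC2 bLa bLc c z1 z2 z3 x1 x2 x3 w :: "complex mat"
  assumes c: "aL2 \<in> carrier_mat r p" "aC2 \<in> carrier_mat r p" "bLa \<in> carrier_mat r p" "bLc \<in> carrier_mat r p"
    "c \<in> carrier_mat r p" "z1 \<in> carrier_mat r p" "z2 \<in> carrier_mat r p" "z3 \<in> carrier_mat r p"
    "x1 \<in> carrier_mat r p" "x2 \<in> carrier_mat r p" "x3 \<in> carrier_mat r p" "w \<in> carrier_mat r p"
    and h3: "x1 + x2 + x3 = w"
    and h4: "w = aL2 - aC2 + (bLa - bLc) + z1 + z2 + z3"
    and h5: "aC2 + bLc + c = 0\<^sub>m r p"
  shows "(aL2 + (z1 - x1)) + (bLa + (z2 - x2)) + (c + (z3 - x3)) = 0\<^sub>m r p"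
proof (rule eq_matI)
  fix i j assume ij: "i < dim_row (0\<^sub>m r p :: complex mat)" "j < dim_col (0\<^sub>m r p :: complex mat)"
  let ?e = "\<lambda>X :: complex mat. X $$ (i,j)"
  have E3: "?e x1 + ?e x2 + ?e x3 = ?e w" using arg_cong[OF h3, of ?e] ij c by (simp add: algebra_simps)
  have E4: "?e w = ?e aL2 - ?e aC2 + (?e bLa - ?e bLc) + ?e z1 + ?e z2 + ?e z3" using arg_cong[OF h4, of ?e] ij c by (simp add: algebra_simps)
  have E5: "?e aC2 + ?e bLc + ?e c = 0" using arg_cong[OF h5, of ?e] ij c by (simp add: algebra_simps)
  have G: "?e ((aL2 + (z1 - x1)) + (bLa + (z2 - x2)) + (c + (z3 - x3)))
     = ?e aL2 + (?e z1 - ?e x1) + (?e bLa + (?e z2 - ?e x2)) + (?e c + (?e z3 - ?e x3))" using ij c by (simp add: algebra_simps)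
  have "?e aL2 + (?e z1 - ?e x1) + (?e bLa + (?e z2 - ?e x2)) + (?e c + (?e z3 - ?e x3)) = 0"
  proof -
    have "?e aL2 + (?e z1 - ?e x1) + (?e bLa + (?e z2 - ?e x2)) + (?e c + (?e z3 - ?e x3)) =
      (?e aL2 - ?e aC2 + (?e bLa - ?e bLc) + ?e z1 + ?e z2 + ?e z3) - (?e x1 + ?e x2 + ?e x3) + (?e aC2 + ?e bLc + ?e c)"
      by (simp add: algebra_simps)
    also have "\<dots> = 0" unfolding E3 E5 E4[symmetric] by simp
    finally show ?thesis .
  qed
  then show "((aL2 + (z1 - x1)) + (bLa + (z2 - x2)) + (c + (z3 - x3))) $$ (i, j) = (0\<^sub>m r p :: complex mat) $$ (i, j)"
    using G ij by simp
qed (use c in auto)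

lemma ctrans_carrier[simp]: "A \<in> carrier_mat a b \<Longrightarrow> ctrans A \<in> carrier_mat b a"
  using star_carrier[of A a b True] by (simp add: star_op_def)

theorem theorem3p5:
  fixes n p :: nat and isReal cs :: bool and e1 e2 :: complex
    and M D K Xc Lc La Q1 Q2 R Z1 Z2 Z3 M22 D22 K22 :: "complex mat"
  defines "Q \<equiv> append_cols Q1 Q2"
  defines "S \<equiv> minv (ctrans (La * La) * (La * La) + ctrans La * La + 1\<^sub>m p)"
  defines "W \<equiv> star_op cs Q2 * M * Xc * (La * La - Lc * Lc) + star_op cs Q2 * D * Xc * (La - Lc)
               + Z1 * (La * La) + Z2 * La + Z3"
  defines "M12 \<equiv> (Z1 - W * S * ctrans (La * La)) * minv R"
  defines "D12 \<equiv> (Z2 - W * S * ctrans La) * minv R"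
  defines "K12 \<equiv> (Z3 - W * S) * minv R"
  defines "\<Delta>M \<equiv> Q * four_block_mat (- (star_op cs Q1 * M * Q1)) (e1 \<cdot>\<^sub>m star_op cs M12) M12 M22 * star_op cs Q"
  defines "\<Delta>D \<equiv> Q * four_block_mat (- (star_op cs Q1 * D * Q1)) (e2 \<cdot>\<^sub>m star_op cs D12) D12 D22 * star_op cs Q"
  defines "\<Delta>K \<equiv> Q * four_block_mat (- (star_op cs Q1 * K * Q1)) (e1 \<cdot>\<^sub>m star_op cs K12) K12 K22 * star_op cs Q"
  assumes e1: "e1 \<in> {1, -1}" and e2: "e2 \<in> {1, -1}"
    and pn: "p \<le> n"
    and QMDK: "in_Qn n cs e1 e2 M D K"
    and dims: "Xc \<in> carrier_mat n p" "Lc \<in> carrier_mat p p" "La \<in> carrier_mat p p"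
      "Q1 \<in> carrier_mat n p" "Q2 \<in> carrier_mat n (n - p)" "R \<in> carrier_mat p p"
      "Z1 \<in> carrier_mat (n - p) p" "Z2 \<in> carrier_mat (n - p) p" "Z3 \<in> carrier_mat (n - p) p"
      "M22 \<in> carrier_mat (n - p) (n - p)" "D22 \<in> carrier_mat (n - p) (n - p)"
      "K22 \<in> carrier_mat (n - p) (n - p)"
    and realK: "isReal \<longrightarrow> (real_mat M \<and> real_mat D \<and> real_mat K \<and> real_mat Xc \<and> real_mat Lc
        \<and> real_mat La \<and> real_mat Q1 \<and> real_mat Q2 \<and> real_mat R \<and> real_mat Z1 \<and> real_mat Z2
        \<and> real_mat Z3 \<and> real_mat M22 \<and> real_mat D22 \<and> real_mat K22)"
    and inv: "invariant_pair M D K Xc Lc"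
    and rk: "vec_space.rank n Xc = p"
    and XQR: "Xc = Q * (R @\<^sub>r 0\<^sub>m (n - p) p)"
    and Rnonsing: "det R \<noteq> 0"
    and Qunit: "star_op cs Q * Q = 1\<^sub>m n" "Q * star_op cs Q = 1\<^sub>m n"
    and M22s: "M22 = e1 \<cdot>\<^sub>m star_op cs M22"
    and D22s: "D22 = e2 \<cdot>\<^sub>m star_op cs D22"
    and K22s: "K22 = e1 \<cdot>\<^sub>m star_op cs K22"
  shows "invariant_pair (M + \<Delta>M) (D + \<Delta>D) (K + \<Delta>K) Xc La
         \<and> in_Qn n cs e1 e2 (M + \<Delta>M) (D + \<Delta>D) (K + \<Delta>K)"
proof -
  let ?r = "n - p"
  have npr: "p + (n - p) = n" using pn by simp
  note Xcc = dims(1) and Lcc = dims(2) and Lac = dims(3) and Q1c = dims(4) and Q2c = dims(5) and Rc = dims(6)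
    and Z1c = dims(7) and Z2c = dims(8) and Z3c = dims(9) and M22c = dims(10) and D22c = dims(11) and K22c = dims(12)
  have Mc: "M \<in> carrier_mat n n" and Dc: "D \<in> carrier_mat n n" and Kc: "K \<in> carrier_mat n n"
    and Ms: "star_op cs M = e1 \<cdot>\<^sub>m M" and Ds: "star_op cs D = e2 \<cdot>\<^sub>m D" and Ks: "star_op cs K = e1 \<cdot>\<^sub>m K"
    using QMDK unfolding in_Qn_def by auto
  define P2 where "P2 = star_op cs Q2"
  have P2c: "P2 \<in> carrier_mat ?r n" unfolding P2_def using Q2c by simp
  define L2 where "L2 = La * La"
  have L2c: "L2 \<in> carrier_mat p p" unfolding L2_def using Lac by simp
  define C2 where "C2 = Lc * Lc"
  have C2c: "C2 \<in> carrier_mat p p" unfolding C2_def using Lcc by simp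
  define N where "N = ctrans L2 * L2 + ctrans La * La + 1\<^sub>m p"
  have Nc: "N \<in> carrier_mat p p" unfolding N_def using L2c Lac by simp
  have detN: "det N \<noteq> 0" unfolding N_def by (rule pd_det[OF Lac L2c])
  have SN: "S \<in> carrier_mat p p" "S * N = 1\<^sub>m p" using minv_props[OF Nc detN] unfolding S_def N_def L2_def by auto
  have RR: "minv R \<in> carrier_mat p p" "minv R * R = 1\<^sub>m p" using minv_props[OF Rc Rnonsing] by auto
  define a where "a = P2 * M * Xc"
  define b where "b = P2 * D * Xc"
  define c where "c = P2 * K * Xc"
  have ac: "a \<in> carrier_mat ?r p" "b \<in> carrier_mat ?r p" "c \<in> carrier_mat ?r p"
    unfolding a_def b_def c_def using P2c Mc Dc Kc Xcc by auto
  have Wc: "W \<in> carrier_mat ?r p" unfolding W_def using P2c Mc Dc Xcc Lac Lcc Z1c Z2c Z3c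
    unfolding P2_def[symmetric] by (intro add_carrier_mat mult_carrier_mat minus_carrier_mat) auto
  have WSc: "W * S \<in> carrier_mat ?r p" using Wc SN(1) by (rule mult_carrier_mat)
  have T1: "Z1 - W * S * ctrans L2 \<in> carrier_mat ?r p"
    by (intro minus_carrier_mat mult_carrier_mat[OF WSc] ctrans_carrier L2c)
  have T2: "Z2 - W * S * ctrans La \<in> carrier_mat ?r p"
    by (intro minus_carrier_mat mult_carrier_mat[OF WSc] ctrans_carrier Lac)
  have T3: "Z3 - W * S \<in> carrier_mat ?r p" by (intro minus_carrier_mat WSc)
  have M12c: "M12 \<in> carrier_mat ?r p" unfolding M12_def L2_def[symmetric] using T1 RR by simp
  have D12c: "D12 \<in> carrier_mat ?r p" unfolding D12_def using T2 RR by simp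
  have K12c: "K12 \<in> carrier_mat ?r p" unfolding K12_def using T3 RR by simp
  have cancelR: "T * minv R * R = T" if "T \<in> carrier_mat ?r p" for T
    using that RR Rc by (simp add: assoc_mult_mat[of T ?r p "minv R" p R p])
  have M12R: "M12 * R = Z1 - W * S * ctrans L2" unfolding M12_def L2_def[symmetric] by (rule cancelR[OF T1])
  have D12R: "D12 * R = Z2 - W * S * ctrans La" unfolding D12_def by (rule cancelR[OF T2])
  have K12R: "K12 * R = Z3 - W * S" unfolding K12_def by (rule cancelR[OF T3])
  have Qu1: "star_op cs (append_cols Q1 Q2) * append_cols Q1 Q2 = 1\<^sub>m n" using Qunit(1) unfolding Q_def .
  have Qu2: "append_cols Q1 Q2 * star_op cs (append_cols Q1 Q2) = 1\<^sub>m n" using Qunit(2) unfolding Q_def .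
  have XQ: "Xc = append_cols Q1 Q2 * (R @\<^sub>r 0\<^sub>m (n - p) p)" using XQR unfolding Q_def .
  have IM: "(M + \<Delta>M) * Xc = Q2 * (a + (Z1 - W * S * ctrans L2))"
    unfolding \<Delta>M_def Q_def a_def P2_def M12R[symmetric]
    by (rule inv_part[OF Mc Q1c Q2c npr Qu1 Qu2 Rc _ M12c M22c XQ]) (use M12c in simp)
  have ID: "(D + \<Delta>D) * Xc = Q2 * (b + (Z2 - W * S * ctrans La))"
    unfolding \<Delta>D_def Q_def b_def P2_def D12R[symmetric]
    by (rule inv_part[OF Dc Q1c Q2c npr Qu1 Qu2 Rc _ D12c D22c XQ]) (use D12c in simp)
  have IK: "(K + \<Delta>K) * Xc = Q2 * (c + (Z3 - W * S))"
    unfolding \<Delta>K_def Q_def c_def P2_def K12R[symmetric]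
    by (rule inv_part[OF Kc Q1c Q2c npr Qu1 Qu2 Rc _ K12c K22c XQ]) (use K12c in simp)
  have Qc: "Q \<in> carrier_mat n n" unfolding Q_def using append_cols_carrier[OF Q1c Q2c] npr by simp
  have DMc: "\<Delta>M \<in> carrier_mat n n" unfolding \<Delta>M_def using Qc Q1c Mc M12c M22c npr
    by (intro mult_carrier_mat[of _ n n] star_carrier) (auto intro!: four_block_carrier_mat[of _ p p _ "n - p" "n - p", simplified npr])
  have DDc: "\<Delta>D \<in> carrier_mat n n" unfolding \<Delta>D_def using Qc Q1c Dc D12c D22c npr
    by (intro mult_carrier_mat[of _ n n] star_carrier) (auto intro!: four_block_carrier_mat[of _ p p _ "n - p" "n - p", simplified npr])
  have DKc: "\<Delta>K \<in> carrier_mat n n" unfolding \<Delta>K_def using Qc Q1c Kc K12c K22c npr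
    by (intro mult_carrier_mat[of _ n n] star_carrier) (auto intro!: four_block_carrier_mat[of _ p p _ "n - p" "n - p", simplified npr])
  have inQ: "in_Qn n cs e1 e2 (M + \<Delta>M) (D + \<Delta>D) (K + \<Delta>K)"
    unfolding in_Qn_def
  proof (intro conjI)
    show "M + \<Delta>M \<in> carrier_mat n n" "D + \<Delta>D \<in> carrier_mat n n" "K + \<Delta>K \<in> carrier_mat n n"
      using DMc DDc DKc by auto
    show "star_op cs (M + \<Delta>M) = e1 \<cdot>\<^sub>m (M + \<Delta>M)" unfolding \<Delta>M_def Q_def
      by (rule herm_part[OF e1 Mc Ms Q1c Q2c M12c M22c M22s])
    show "star_op cs (D + \<Delta>D) = e2 \<cdot>\<^sub>m (D + \<Delta>D)" unfolding \<Delta>D_def Q_def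
      by (rule herm_part[OF e2 Dc Ds Q1c Q2c D12c D22c D22s])
    show "star_op cs (K + \<Delta>K) = e1 \<cdot>\<^sub>m (K + \<Delta>K)" unfolding \<Delta>K_def Q_def
      by (rule herm_part[OF e1 Kc Ks Q1c Q2c K12c K22c K22s])
  qed
  have MXC: "M * Xc * C2 \<in> carrier_mat n p" "D * Xc * Lc \<in> carrier_mat n p" "K * Xc \<in> carrier_mat n p"
    using Mc Dc Kc Xcc C2c Lcc by auto
  have inv0: "M * Xc * C2 + D * Xc * Lc + K * Xc = 0\<^sub>m n p"
    using inv Mc Lcc unfolding invariant_pair_def C2_def by simp
  have "P2 * (M * Xc * C2 + D * Xc * Lc + K * Xc) = P2 * (M * Xc * C2) + P2 * (D * Xc * Lc) + P2 * (K * Xc)"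
    unfolding mult_add_distrib_mat[OF P2c add_carrier_mat[OF MXC(2)] MXC(3)] mult_add_distrib_mat[OF P2c MXC(1,2)] ..
  also have "P2 * (M * Xc * C2) = a * C2" unfolding a_def using P2c Mc Xcc C2c
    by (simp add: assoc_mult_mat[of "P2*M" ?r n Xc p C2 p] assoc_mult_mat[of P2 ?r n M n "Xc*C2" p]
      assoc_mult_mat[of M n n Xc p C2 p] assoc_mult_mat[of P2 ?r n M n Xc p] assoc_mult_mat[of P2 ?r n "M*Xc" p C2 p])
  also have "P2 * (D * Xc * Lc) = b * Lc" unfolding b_def using P2c Dc Xcc Lcc
    by (simp add: assoc_mult_mat[of "P2*D" ?r n Xc p Lc p] assoc_mult_mat[of P2 ?r n D n "Xc*Lc" p]
      assoc_mult_mat[of D n n Xc p Lc p] assoc_mult_mat[of P2 ?r n D n Xc p] assoc_mult_mat[of P2 ?r n "D*Xc" p Lc p])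
  also have "P2 * (K * Xc) = c" unfolding c_def using P2c Kc Xcc
    by (simp add: assoc_mult_mat[of P2 ?r n K n Xc p])
  finally have h5: "a * C2 + b * Lc + c = 0\<^sub>m ?r p" unfolding inv0 using P2c by simp
  have h4: "W = a * L2 - a * C2 + (b * La - b * Lc) + Z1 * L2 + Z2 * La + Z3"
    unfolding W_def P2_def[symmetric] a_def[symmetric] b_def[symmetric] L2_def[symmetric] C2_def[symmetric]
    using ac L2c C2c Lac Lcc
    by (simp add: mult_minus_distrib_mat[of a ?r p L2 p C2] mult_minus_distrib_mat[of b ?r p La p Lc])
  have cL2: "ctrans L2 * L2 \<in> carrier_mat p p" "ctrans La * La \<in> carrier_mat p p"
    using mult_carrier_mat[OF ctrans_carrier[OF L2c] L2c] mult_carrier_mat[OF ctrans_carrier[OF Lac] Lac] by auto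
  have "W = W * (S * N)" using Wc SN by simp
  also have "\<dots> = (W * S) * N" using Wc SN Nc by simp
  also have "\<dots> = (W * S) * (ctrans L2 * L2) + (W * S) * (ctrans La * La) + W * S"
    unfolding N_def mult_add_distrib_mat[OF WSc add_carrier_mat[OF cL2(2)] one_carrier_mat]
      mult_add_distrib_mat[OF WSc cL2(1) cL2(2)] right_mult_one_mat[OF WSc] ..
  finally have h3: "(W * S) * (ctrans L2 * L2) + (W * S) * (ctrans La * La) + W * S = W" by simp
  have GM: "(a + (Z1 - W * S * ctrans L2)) * L2 = a * L2 + (Z1 * L2 - (W * S) * (ctrans L2 * L2))"
    unfolding add_mult_distrib_mat[OF ac(1) T1 L2c]
      minus_mult_distrib_mat[OF Z1c mult_carrier_mat[OF WSc ctrans_carrier[OF L2c]] L2c]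
      assoc_mult_mat[OF WSc ctrans_carrier[OF L2c] L2c] ..
  have GD: "(b + (Z2 - W * S * ctrans La)) * La = b * La + (Z2 * La - (W * S) * (ctrans La * La))"
    unfolding add_mult_distrib_mat[OF ac(2) T2 Lac]
      minus_mult_distrib_mat[OF Z2c mult_carrier_mat[OF WSc ctrans_carrier[OF Lac]] Lac]
      assoc_mult_mat[OF WSc ctrans_carrier[OF Lac] Lac] ..
  have G0: "(a + (Z1 - W * S * ctrans L2)) * L2 + (b + (Z2 - W * S * ctrans La)) * La + (c + (Z3 - W * S)) = 0\<^sub>m ?r p"
    unfolding GM GD
    by (rule lin_comb[OF _ _ _ _ _ _ _ _ _ _ _ _ h3 h4 h5]) (use ac L2c Lac C2c Lcc Z1c Z2c Z3c WSc cL2 Wc in auto)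
  have GMc: "a + (Z1 - W * S * ctrans L2) \<in> carrier_mat ?r p" using T1 by simp
  have GDc: "b + (Z2 - W * S * ctrans La) \<in> carrier_mat ?r p" using T2 by simp
  have GKc: "c + (Z3 - W * S) \<in> carrier_mat ?r p" using T3 by simp
  have "(M + \<Delta>M) * Xc * (La * La) + (D + \<Delta>D) * Xc * La + (K + \<Delta>K) * Xc
     = Q2 * ((a + (Z1 - W * S * ctrans L2)) * L2) + Q2 * ((b + (Z2 - W * S * ctrans La)) * La) + Q2 * (c + (Z3 - W * S))"
    unfolding IM ID IK L2_def[symmetric] using Q2c GMc GDc L2c Lac
    by (simp add: assoc_mult_mat[of Q2 n ?r _ p L2 p] assoc_mult_mat[of Q2 n ?r _ p La p])
  also have "\<dots> = Q2 * ((a + (Z1 - W * S * ctrans L2)) * L2 + (b + (Z2 - W * S * ctrans La)) * La + (c + (Z3 - W * S)))"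
    using Q2c GMc GDc GKc L2c Lac
    by (simp add: mult_add_distrib_mat[of Q2 n ?r _ p])
  also have "\<dots> = 0\<^sub>m n p" unfolding G0 using Q2c by simp
  finally have "invariant_pair (M + \<Delta>M) (D + \<Delta>D) (K + \<Delta>K) Xc La"
    unfolding invariant_pair_def using DMc Lac by simp
  with inQ show ?thesis by simp
qed

end
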